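(* Let $g(x)=1-2e^{-x}+\frac{1-e^{-x}}{x}$. For all $0<p<1$ and $s\in\mathbb{Z}^+$, \[ g(sp)\leqslant h^0_{\{1,2\}}(s,p)\leqslant g(sp)+\left(1+\frac{1}{\sqrt e}\right)\frac{p}{1-p}, \] and \[ h^0_{J_{sym}}(s,p)\leqslant\frac12\left(g(sp)+e^{-2sp}g(-sp)\right)+\frac12\left(1+\frac{2}{e^{3/4}}\right)\frac{p}{1-p}+\frac{4e^{3/2}-1}{6e^3}\,\frac{p^2}{(1-p^2)^2}. \]
   Context: $\mathbb{Z}^+$ is the set of positive integers and $J_{sym}=\{2\}\cup\{2m+1:m\geqslant0\}$. For $J\subset\mathbb{Z}^+$, integer $s\geqslant1$ and $0<p<1$, \[ h_J^0(s,p)=\frac{(1-p)^s}{p^2}\left(\frac{p^2}{(1-p)^{s+1}}+\frac{p}{s}\frac{1}{(1-p)^s}-\sum_{k\in J}k\frac{(k+s-2)!}{(k-1)!\,s!}p^k\right). \] In particular $h^0_{\{1,2\}}(s,p)=\frac{1}{1-p}-2(1-p)^s+\frac{1-(1-p)^s}{ps}$ and $h^0_{J_{sym}}(s,p)=\frac12\left(h^0_{\{1,2\}}(s,p)+\frac{(1-p)^s}{(1+p)^s}h^0_{\{1,2\}}(s,-p)\right)$, where $h^0_{\{1,2\}}(s,-p)$ denotes the closed-form expression evaluated at $-p$. *)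

theory Defs
  imports "HOL-Analysis.Analysis"
begin

definition J_sym :: "nat set" where
  "J_sym = {2} \<union> {2*m+1 | m. True}"

definition h0 :: "nat set \<Rightarrow> nat \<Rightarrow> real \<Rightarrow> real" where
  "h0 J s p = (1 - p) ^ s / p\<^sup>2 *
     (p\<^sup>2 / (1 - p) ^ (s + 1) + p / real s * (1 / (1 - p) ^ s)
      - (\<Sum>\<^sub>\<infinity>k\<in>J. real k * fact (k + s - 2) / (fact (k - 1) * fact s) * p ^ k))"

definition g_fun :: "real \<Rightarrow> real" where
  "g_fun x = 1 - 2 * exp (- x) + (1 - exp (- x)) / x"

end

theory Submission
  imports Defs
begin


lemma negbin_sums:
  fixes x :: real assumes "\<bar>x\<bar> < 1"
  shows "(\<lambda>j. real ((j + m) choose j) * x ^ j) sums (1 / (1 - x) ^ (m + 1))"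
proof -
  have "(\<lambda>n. ((- real (m+1)) gchoose n) * (-x)^n) sums (1 + (-x)) powr (- real (m+1))"
    by (rule gen_binomial_real) (use assms in auto)
  moreover have "((- real (m+1)) gchoose n) * (-x)^n = real ((n + m) choose n) * x ^ n" for n
  proof -
    have "((- real (m+1)) gchoose n) = (-1)^n * ((real (m+1) + real n - 1) gchoose n)"
      by (rule gbinomial_minus)
    also have "real (m+1) + real n - 1 = real (n + m)" by simp
    also have "(real (n+m) gchoose n) = real ((n+m) choose n)" by (simp add: binomial_gbinomial)
    finally show ?thesis by (simp add: power_mult_distrib[symmetric])
  qed
  moreover have "(1 + (-x)) powr (- real (m+1)) = 1 / (1 - x) ^ (m + 1)"
  proof -
    have "(1 + (-x)) powr (- real (m+1)) = inverse ((1 - x) powr real (m+1))"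
      by (simp only: powr_minus) simp
    also have "(1 - x) powr real (m+1) = (1 - x) ^ (m+1)"
      using assms by (intro powr_realpow) auto
    finally show ?thesis by (simp add: divide_inverse)
  qed
  ultimately show ?thesis by simp
qed

definition cc :: "nat \<Rightarrow> nat \<Rightarrow> real" where
  "cc s k = real k * fact (k + s - 2) / (fact (k - 1) * fact s)"

definition FF :: "nat \<Rightarrow> real \<Rightarrow> real" where
  "FF s x = x / real s * (1 / (1 - x) ^ s) + x\<^sup>2 / (1 - x) ^ (s + 1)"

lemma cc_Suc:
  assumes "s \<ge> 1"
  shows "cc s (Suc j) = real ((j + s) choose j) - (real s - 1) / real s * real ((j + (s - 1)) choose j)"
proof -
  obtain t where s: "s = Suc t" using assms by (cases s) auto
  have e1: "real ((j + s) choose j) = fact (j + t + 1) / (fact j * fact (t + 1))"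
    unfolding s by (subst binomial_fact) (auto simp: algebra_simps)
  have e2: "real ((j + (s-1)) choose j) = fact (j + t) / (fact j * fact t)"
    unfolding s by (subst binomial_fact) (auto simp: algebra_simps)
  have e3: "cc s (Suc j) = real (Suc j) * fact (j + t) / (fact j * fact (t+1))"
    unfolding cc_def s by (simp add: algebra_simps)
  have f1: "(fact (j + t + 1) :: real) = real (j + t + 1) * fact (j + t)"
    by (metis add.commute fact_Suc of_nat_Suc plus_1_eq_Suc)
  have f2: "(fact (t + 1) :: real) = real (t + 1) * fact t"
    by (metis add.commute fact_Suc of_nat_Suc plus_1_eq_Suc)
  have rs: "real s = real t + 1" using s by simp
  have pos: "(fact (j + t) :: real) > 0" "(fact j :: real) > 0" "(fact t :: real) > 0" 
     "fact j * fact t + fact j * (fact t * real t) > (0::real)" by (auto intro!: add_pos_nonneg)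
  have gen: "\<And>F A B jj tt::real. F > 0 \<Longrightarrow> A > 0 \<Longrightarrow> B > 0 \<Longrightarrow> tt \<ge> 0 \<Longrightarrow>
     (jj + 1) * F / (A * ((tt + 1) * B)) = (jj + tt + 1) * F / (A * ((tt + 1) * B)) - (tt + 1 - 1) / (tt + 1) * (F / (A * B))"
  proof -
    fix F A B jj tt :: real assume h: "F > 0" "A > 0" "B > 0" "tt \<ge> 0"
    have "A * ((tt + 1) * B) > 0" "tt + 1 > 0" "A * B > 0" using h by auto
    then show "(jj + 1) * F / (A * ((tt + 1) * B)) = (jj + tt + 1) * F / (A * ((tt + 1) * B)) - (tt + 1 - 1) / (tt + 1) * (F / (A * B))"
      by (simp add: divide_simps) (simp add: algebra_simps)
  qed
  show ?thesis unfolding e1 e2 e3 f1 f2 rs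
    using gen[OF pos(1-3), of "real t" "real j"] by (simp add: add.commute add.left_commute)
qed

lemma cc_sums:
  fixes x :: real assumes "\<bar>x\<bar> < 1" "s \<ge> 1"
  shows "(\<lambda>k. cc s k * x ^ k) sums FF s x"
proof -
  have A: "(\<lambda>j. real ((j + s) choose j) * x ^ j) sums (1 / (1 - x) ^ (s + 1))"
    by (rule negbin_sums[OF assms(1)])
  have B: "(\<lambda>j. real ((j + (s-1)) choose j) * x ^ j) sums (1 / (1 - x) ^ s)"
    using negbin_sums[OF assms(1), of "s-1"] assms(2) by simp
  have C: "(\<lambda>j. x * (real ((j + s) choose j) * x ^ j) - x * ((real s - 1) / real s) * (real ((j + (s-1)) choose j) * x ^ j))
      sums (x * (1 / (1 - x) ^ (s + 1)) - x * ((real s - 1) / real s) * (1 / (1 - x) ^ s))"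
    by (intro sums_diff sums_mult A B)
  have D: "(\<lambda>j. cc s (Suc j) * x ^ Suc j) sums (x * (1 / (1 - x) ^ (s + 1)) - x * ((real s - 1) / real s) * (1 / (1 - x) ^ s))"
    using C by (simp add: cc_Suc[OF assms(2)] algebra_simps)
  have E: "x * (1 / (1 - x) ^ (s + 1)) - x * ((real s - 1) / real s) * (1 / (1 - x) ^ s) = FF s x"
  proof -
    have "1 - x \<noteq> 0" using assms by auto
    moreover have "real s \<noteq> 0" using assms by auto
    ultimately show ?thesis unfolding FF_def by (simp add: field_simps power2_eq_square)
  qed
  have "cc s 0 = 0" by (simp add: cc_def)
  then show ?thesis using D E sums_Suc_iff[of "\<lambda>k. cc s k * x ^ k"] by simp
qed


lemma alg1:
  fixes A u p S :: real
  assumes "A > 0" "u \<noteq> 0" "p \<noteq> 0" "S \<noteq> 0"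
  shows "A / p\<^sup>2 * (p\<^sup>2 / (u * A) + p / S * (1 / A) - (p / S + 2 * p\<^sup>2)) = 1 / u - 2 * A + (1 - A) / (p * S)"
  using assms by (simp add: field_simps power2_eq_square)
lemma alg2:
  fixes A B u v p S :: real
  assumes "A > 0" "B > 0" "u \<noteq> 0" "v \<noteq> 0" "p \<noteq> 0" "S \<noteq> 0"
  shows "A / p\<^sup>2 * (p\<^sup>2 / (u * A) + p / S * (1 / A) - (2 * p\<^sup>2 + ((p / S * (1 / A) + p\<^sup>2 / (u * A)) - (- p / S * (1 / B) + p\<^sup>2 / (v * B))) / 2))
     = ((1 / u - 2 * A + (1 - A) / (p * S)) + A / B * (1 / v - 2 * B + (1 - B) / (- p * S))) / 2"
  using assms by (simp add: field_simps power2_eq_square)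


definition HH :: "nat \<Rightarrow> real \<Rightarrow> real" where
  "HH s p = 1 / (1 - p) - 2 * (1 - p) ^ s + (1 - (1 - p) ^ s) / (p * real s)"

lemma h0_cc: "h0 J s p = (1 - p) ^ s / p\<^sup>2 *
     (p\<^sup>2 / (1 - p) ^ (s + 1) + p / real s * (1 / (1 - p) ^ s) - (\<Sum>\<^sub>\<infinity>k\<in>J. cc s k * p ^ k))"
  unfolding h0_def cc_def by simp

lemma cc1: "s \<ge> 1 \<Longrightarrow> cc s (Suc 0) = 1 / real s"
proof -
  assume "s \<ge> 1" then obtain t where "s = Suc t" by (cases s) auto
  then show ?thesis by (simp add: cc_def)
qed

lemma cc2: "cc s 2 = 2"
  by (simp add: cc_def)

lemma cc_nonneg: "cc s k \<ge> 0" by (simp add: cc_def)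

lemma h12:
  assumes "0 < p" "p < 1" "s \<ge> 1"
  shows "h0 {1,2} s p = HH s p"
proof -
  have "(\<Sum>\<^sub>\<infinity>k\<in>{1,2}. cc s k * p ^ k) = p / real s + 2 * p\<^sup>2"
    using assms cc1[OF assms(3)] by (simp add: cc2 power2_eq_square)
  then have e: "h0 {1,2} s p = (1 - p) ^ s / p\<^sup>2 *
     (p\<^sup>2 / (1 - p) ^ (s + 1) + p / real s * (1 / (1 - p) ^ s) - (p / real s + 2 * p\<^sup>2))"
    by (simp add: h0_cc)
  have A: "(1 - p) ^ s > 0" using assms by simp
  have "1 - p \<noteq> 0" "p \<noteq> 0" "real s \<noteq> 0" using assms by auto
  from alg1[OF A this] show ?thesis unfolding e HH_def power_Suc[of "1-p" s, unfolded Suc_eq_plus1] by simp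
qed

lemma hsym:
  assumes "0 < p" "p < 1" "s \<ge> 1"
  shows "h0 J_sym s p = (HH s p + ((1 - p) / (1 + p)) ^ s * HH s (- p)) / 2"
proof -
  define g where "g k = (cc s k * p ^ k - cc s k * (- p) ^ k) / 2" for k
  have ab1: "\<bar>p\<bar> < 1" "\<bar>-p\<bar> < 1" using assms by auto
  have "g sums ((FF s p - FF s (-p)) / 2)"
    unfolding g_def by (intro sums_divide sums_diff cc_sums ab1 assms(3))
  moreover have "g k \<ge> 0" for k
  proof -
    have "(- p) ^ k \<le> p ^ k"
      using assms by (cases "even k") (auto simp: power_minus_odd)
    then have "cc s k * (- p) ^ k \<le> cc s k * p ^ k"
      using cc_nonneg[of s k] by (rule mult_left_mono)
    then show ?thesis unfolding g_def by simp
  qed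
  ultimately have gU: "(g has_sum ((FF s p - FF s (-p)) / 2)) UNIV"
    by (rule sums_nonneg_imp_has_sum)
  define Od where "Od = {2*m+1 | m::nat. True}"
  have oddO: "k \<in> Od \<longleftrightarrow> odd k" for k
    unfolding Od_def by (auto elim: oddE)
  have hO: "((\<lambda>k. cc s k * p ^ k) has_sum ((FF s p - FF s (-p)) / 2)) Od"
  proof (rule has_sum_cong_neutral[THEN iffD1, OF _ _ _ gU])
    show "g x = 0" if "x \<in> UNIV - Od" for x
      using that oddO[of x] unfolding g_def by auto
    show "cc s x * p ^ x = 0" if "x \<in> Od - UNIV" for x using that by auto
    show "g x = cc s x * p ^ x" if "x \<in> UNIV \<inter> Od" for x
      using that oddO[of x] unfolding g_def by (auto simp: power_minus_odd)
  qed
  have h2: "((\<lambda>k. cc s k * p ^ k) has_sum (2 * p\<^sup>2)) {2}"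
    using has_sum_finite[of "{2::nat}" "\<lambda>k. cc s k * p ^ k"] by (simp add: cc2)
  have disj: "{2} \<inter> Od = {}" using oddO by auto
  have "((\<lambda>k. cc s k * p ^ k) has_sum (2 * p\<^sup>2 + (FF s p - FF s (-p)) / 2)) ({2} \<union> Od)"
    by (rule has_sum_Un_disjoint[OF h2 hO disj])
  moreover have "J_sym = {2} \<union> Od" unfolding J_sym_def Od_def by auto
  ultimately have "(\<Sum>\<^sub>\<infinity>k\<in>J_sym. cc s k * p ^ k) = 2 * p\<^sup>2 + (FF s p - FF s (-p)) / 2"
    by (simp add: infsumI)
  then have e: "h0 J_sym s p = (1 - p) ^ s / p\<^sup>2 *
     (p\<^sup>2 / (1 - p) ^ (s + 1) + p / real s * (1 / (1 - p) ^ s) - (2 * p\<^sup>2 + (FF s p - FF s (-p)) / 2))"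
    by (simp add: h0_cc)
  have A: "(1 - p) ^ s > 0" "(1 + p) ^ s > 0" using assms by auto
  have "1 - p \<noteq> 0" "1 + p \<noteq> 0" "p \<noteq> 0" "real s \<noteq> 0" using assms by auto
  from alg2[OF A this] show ?thesis unfolding e HH_def FF_def power_Suc[of "1-p" s, unfolded Suc_eq_plus1]
     power_Suc[of "1+p" s, unfolded Suc_eq_plus1] power_divide by simp
qed


lemma lnA_y:
  fixes y :: real assumes "0 < y" "y \<le> 1"
  shows "(y - 1 / y) / 2 \<le> ln y"
proof -
  define f where "f t = (t - 1 / t) / 2 - ln t" for t :: real
  have "f y \<le> f 1"
  proof (rule DERIV_nonneg_imp_increasing_open[OF assms(2)])
    fix t :: real assume t: "y < t" "t < 1"
    then have t0: "t > 0" using assms by auto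
    have d: "DERIV f t :> ((1 + 1 / t ^ 2) / 2 - 1 / t)"
      unfolding f_def using t0 by (auto intro!: derivative_eq_intros simp: power2_eq_square)
    have e: "(1 + 1 / t ^ 2) / 2 - 1 / t = (1 / t - 1)\<^sup>2 / 2"
      using t0 by (simp add: field_simps power2_eq_square)
    have "(1 / t - 1)\<^sup>2 / 2 \<ge> 0" by simp
    then have "(1 + 1 / t ^ 2) / 2 - 1 / t \<ge> 0" using e by linarith
    with d show "\<exists>d. DERIV f t :> d \<and> 0 \<le> d" by blast
  next
    have "\<forall>t\<in>{y..1}. t \<noteq> 0" using assms by auto
    then show "continuous_on {y..1} f" unfolding f_def 
      by (intro continuous_intros) auto
  qed
  then show ?thesis unfolding f_def by simp
qed

lemma lnB:
  fixes p :: real assumes "0 \<le> p" "p < 1"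
  shows "2 * p \<le> ln (1 + p) - ln (1 - p)"
proof -
  define f where "f t = ln (1 + t) - ln (1 - t) - 2 * t" for t :: real
  have "f 0 \<le> f p"
  proof (rule DERIV_nonneg_imp_increasing_open[OF assms(1)])
    fix t :: real assume t: "0 < t" "t < p"
    then have t1: "1 - t > 0" "1 + t > 0" using assms by auto
    have d: "DERIV f t :> (1 / (1 + t) + 1 / (1 - t) - 2)"
      unfolding f_def using t1 by (auto intro!: derivative_eq_intros)
    have i1: "1 / (1 + t) \<ge> 1 - t" using t1 
      by (simp add: le_divide_eq algebra_simps)
    have i2: "1 / (1 - t) \<ge> 1 + t" using t1
      by (simp add: le_divide_eq algebra_simps)
    have "1 / (1 + t) + 1 / (1 - t) - 2 \<ge> 0" using i1 i2 by linarith
    with d show "\<exists>d. DERIV f t :> d \<and> 0 \<le> d" by blast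
  next
    have "\<forall>t\<in>{0..p}. 1 - t > 0 \<and> 1 + t > 0" using assms by auto
    then show "continuous_on {0..p} f" unfolding f_def
      by (intro continuous_intros) auto
  qed
  then show ?thesis unfolding f_def by simp
qed

lemma lnC:
  fixes p :: real assumes "0 \<le> p" "p < 1"
  shows "(1 - p\<^sup>2) * (ln (1 + p) - ln (1 - p) - 2 * p) \<le> 2 / 3 * p ^ 3"
proof -
  define f where "f t = 2 / 3 * t ^ 3 - (1 - t\<^sup>2) * (ln (1 + t) - ln (1 - t) - 2 * t)" for t :: real
  have "f 0 \<le> f p"
  proof (rule DERIV_nonneg_imp_increasing_open[OF assms(1)])
    fix t :: real assume t: "0 < t" "t < p"
    then have t1: "1 - t > 0" "1 + t > 0" using assms by auto
    have d0: "DERIV f t :> (2 * t\<^sup>2 - ((- (2 * t)) * (ln (1 + t) - ln (1 - t) - 2 * t) + (1 - t\<^sup>2) * (1 / (1 + t) + 1 / (1 - t) - 2)))"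
      unfolding f_def using t1 by (auto intro!: derivative_eq_intros)
    have e: "(1 - t\<^sup>2) * (1 / (1 + t) + 1 / (1 - t) - 2) = 2 * t\<^sup>2"
    proof -
      have "(1 - t\<^sup>2) * (1 / (1 + t) + 1 / (1 - t) - 2) = (1 - t) * (1 + t) * (1 / (1 + t)) + (1 + t) * (1 - t) * (1 / (1 - t)) - 2 * (1 - t\<^sup>2)"
        by (simp add: algebra_simps power2_eq_square)
      also have "\<dots> = (1 - t) + (1 + t) - 2 * (1 - t\<^sup>2)" using t1 by simp
      also have "\<dots> = 2 * t\<^sup>2" by (simp add: power2_eq_square algebra_simps)
      finally show ?thesis .
    qed
    have d: "DERIV f t :> 2 * t * (ln (1 + t) - ln (1 - t) - 2 * t)"
      using d0 unfolding e by (simp add: algebra_simps)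
    have "2 * t \<le> ln (1 + t) - ln (1 - t)" using lnB[of t] t t1 by auto
    then have "0 \<le> 2 * t * (ln (1 + t) - ln (1 - t) - 2 * t)" using t by simp
    with d show "\<exists>d. DERIV f t :> d \<and> 0 \<le> d" by blast
  next
    have "\<forall>t\<in>{0..p}. 1 - t > 0 \<and> 1 + t > 0" using assms by auto
    then show "continuous_on {0..p} f" unfolding f_def
      by (intro continuous_intros) auto
  qed
  then show ?thesis unfolding f_def by simp
qed


lemma algD:
  fixes P p u v x a b q r A B E :: real
  assumes "u = 1 - p" "v = 1 + p" "x \<noteq> 0" "v \<noteq> 0" "u \<noteq> 0" "r * B = a" "q * E = b"
  shows "((1 / u - 2 * a + (1 - a) / x) + r * (1 / v - 2 * B + (1 - B) / (- x))) / 2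
       - ((1 - 2 * b + (1 - b) / x) + q * (1 - 2 * E + (1 - E) / (- x))) / 2
       = (p / u - r * p / v + 4 * (b - a) + (q - r) * (1 / x - 1)) / 2"
proof -
  define ix where "ix = 1 / x"
  have dx: "\<And>z. z / x = z * ix" "\<And>z. z / (- x) = - (z * ix)" unfolding ix_def by simp_all
  have u1: "1 / u = 1 + p / u" using assms by (simp add: field_simps)
  have v1: "r * (1 / v) = r - r * p / v" using assms by (simp add: field_simps)
  have "r * (1 / v - 2 * B + (1 - B) / (- x)) = r * (1 / v) - 2 * (r * B) - (r - r * B) * ix"
    unfolding dx by (simp add: algebra_simps)
  also have "\<dots> = r - r * p / v - 2 * a - (r - a) * ix" unfolding v1 assms(6) by simp
  finally have e1: "r * (1 / v - 2 * B + (1 - B) / (- x)) = r - r * p / v - 2 * a - (r - a) * ix" .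
  have "q * (1 - 2 * E + (1 - E) / (- x)) = q - 2 * (q * E) - (q - q * E) * ix"
    unfolding dx by (simp add: algebra_simps)
  also have "\<dots> = q - 2 * b - (q - b) * ix" unfolding assms(7) by simp
  finally have e2: "q * (1 - 2 * E + (1 - E) / (- x)) = q - 2 * b - (q - b) * ix" .
  show ?thesis unfolding e1 e2 unfolding u1 dx ix_def[symmetric] using assms(4,5) by (simp add: field_simps)
qed



theorem lemma5:
  fixes p :: real and s :: nat
  assumes "0 < p" "p < 1" "s \<ge> 1"
  shows "g_fun (real s * p) \<le> h0 {1, 2} s p
       \<and> h0 {1, 2} s p \<le> g_fun (real s * p) + (1 + 1 / sqrt (exp 1)) * (p / (1 - p))
       \<and> h0 J_sym s p \<le> 1/2 * (g_fun (real s * p) + exp (- 2 * real s * p) * g_fun (- (real s * p)))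
           + 1/2 * (1 + 2 / exp (3/4)) * (p / (1 - p))
           + (4 * exp (3/2) - 1) / (6 * exp 3) * (p\<^sup>2 / (1 - p\<^sup>2)\<^sup>2)"
proof -
  define x where "x = real s * p"
  define u where "u = 1 - p"
  define v where "v = 1 + p"
  define P where "P = p / u"
  define a where "a = (1 - p) ^ s"
  define b where "b = exp (- x)"
  define q where "q = exp (- 2 * x)"
  define r where "r = ((1 - p) / (1 + p)) ^ s"
  define B where "B = (1 + p) ^ s"
  define E where "E = exp x"
  have s1: "real s \<ge> 1" using assms by simp
  have u0: "u > 0" "v > 0" unfolding u_def v_def using assms by auto
  have x0: "x > 0" unfolding x_def using assms by simp
  have px: "p \<le> x" unfolding x_def using mult_right_mono[of 1 "real s" p] assms s1 by simp
  have P0: "P > 0" unfolding P_def using u0 assms by simp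
  have b0: "b > 0" "q > 0" "q \<le> 1" unfolding b_def q_def using x0 by auto
  have ln_u: "ln u \<le> - p" unfolding u_def using ln_one_minus_pos_upper_bound[of p] assms by simp
  have a_exp: "a = exp (real s * ln u)"
    unfolding a_def u_def using assms by (simp add: exp_of_nat_mult)
  have r_exp: "r = exp (real s * (ln u - ln v))"
  proof -
    have "exp (real s * (ln u - ln v)) = exp (ln u - ln v) ^ s" by (rule exp_of_nat_mult)
    also have "exp (ln u - ln v) = (1 - p) / (1 + p)" using u0 unfolding u_def v_def
      by (simp add: exp_diff)
    finally show ?thesis unfolding r_def by simp
  qed
  have ab: "a \<le> b"
  proof -
    have "real s * ln u \<le> real s * (- p)" using ln_u s1 by (intro mult_left_mono) auto
    then have "real s * ln u \<le> - x" unfolding x_def by simp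
    then show ?thesis unfolding a_exp b_def by simp
  qed
  have ba: "b - a \<le> b * (x * P / 2)"
  proof -
    have "(u - 1 / u) / 2 \<le> ln u" using lnA_y[of u] u0 assms unfolding u_def by simp
    moreover have "(u - 1 / u) / 2 = - p - p * P / 2" unfolding P_def u_def using u0 unfolding u_def
      by (simp add: field_simps power2_eq_square)
    ultimately have "real s * (- p - p * P / 2) \<le> real s * ln u" using s1 by (simp add: mult_left_mono)
    then have "- x - x * P / 2 \<le> real s * ln u" unfolding x_def by (simp add: algebra_simps)
    then have "exp (- x - x * P / 2) \<le> a" unfolding a_exp by simp
    moreover have "exp (- x - x * P / 2) = b * exp (- (x * P / 2))" unfolding b_def
      by (simp add: exp_add[symmetric])
    moreover have "1 - x * P / 2 \<le> exp (- (x * P / 2))" using exp_ge_add_one_self[of "- (x * P / 2)"] by simp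
    then have "b * (1 - x * P / 2) \<le> b * exp (- (x * P / 2))" using b0 by (intro mult_left_mono) auto
    ultimately have "b * (1 - x * P / 2) \<le> a" by linarith
    then show ?thesis by (simp add: algebra_simps)
  qed
  have L1: "2 * p \<le> ln v - ln u" using lnB[of p] assms unfolding u_def v_def by simp
  have "p * p < p * 1" by (rule mult_strict_left_mono) (use assms in auto)
  then have "p * p < 1" using assms by linarith
  then have p2: "1 - p\<^sup>2 > 0" by (simp add: power2_eq_square)
  define K where "K = 2 / 3 * x * p\<^sup>2 / (1 - p\<^sup>2)"
  have L2: "ln v - ln u \<le> 2 * p + 2 / 3 * p ^ 3 / (1 - p\<^sup>2)"
  proof -
    have "(1 - p\<^sup>2) * (ln v - ln u - 2 * p) \<le> 2 / 3 * p ^ 3" using lnC[of p] assms unfolding u_def v_def by simp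
    then have "(ln v - ln u - 2 * p) * (1 - p\<^sup>2) \<le> 2 / 3 * p ^ 3" by (simp only: mult.commute)
    then have "ln v - ln u - 2 * p \<le> 2 / 3 * p ^ 3 / (1 - p\<^sup>2)" by (rule pos_le_divide_eq[OF p2, THEN iffD2])
    then show ?thesis by simp
  qed
  have rq: "r \<le> q"
  proof -
    have "real s * (ln u - ln v) \<le> real s * (- 2 * p)" using L1 s1 by (intro mult_left_mono) auto
    then show ?thesis unfolding r_exp q_def x_def by simp
  qed
  have qr: "q - r \<le> q * K"
  proof -
    have "real s * (- 2 * p - 2 / 3 * p ^ 3 / (1 - p\<^sup>2)) \<le> real s * (ln u - ln v)" using L2 s1 by (intro mult_left_mono) auto
    moreover have "real s * (- 2 * p - 2 / 3 * p ^ 3 / (1 - p\<^sup>2)) = - 2 * x - K"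
      unfolding K_def x_def by (simp add: algebra_simps power3_eq_cube power2_eq_square)
    ultimately have "exp (- 2 * x - K) \<le> r" unfolding r_exp by simp
    moreover have "exp (- 2 * x - K) = q * exp (- K)" unfolding q_def by (simp add: exp_diff exp_minus field_simps)
    moreover have "1 - K \<le> exp (- K)" using exp_ge_add_one_self[of "- K"] by simp
    then have "q * (1 - K) \<le> q * exp (- K)" using b0 by (intro mult_left_mono) auto
    ultimately have "q * (1 - K) \<le> r" by linarith
    then show ?thesis by (simp add: algebra_simps)
  qed
  have r0: "r \<ge> 0" unfolding r_exp by simp
  have H1: "h0 {1,2} s p = 1 / u - 2 * a + (1 - a) / x"
    using h12[OF assms] unfolding HH_def u_def a_def x_def by (simp add: mult.commute)
  have G1: "g_fun (real s * p) = 1 - 2 * b + (1 - b) / x"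
    unfolding g_fun_def b_def x_def by simp
  have part1: "g_fun (real s * p) \<le> h0 {1, 2} s p"
  proof -
    have "1 \<le> 1 / u" using u0 unfolding u_def using assms by simp
    moreover have "(1 - b) / x \<le> (1 - a) / x" using ab x0 by (simp add: divide_right_mono)
    ultimately show ?thesis unfolding H1 G1 using ab by linarith
  qed
  have part2: "h0 {1, 2} s p \<le> g_fun (real s * p) + (1 + 1 / sqrt (exp 1)) * (p / (1 - p))"
  proof -
    have sq: "1 / sqrt (exp 1) = exp (- 1 / 2)"
    proof -
      have e: "exp (1::real) = exp (1/2) * exp (1/2)" by (simp add: exp_add[symmetric])
      have "sqrt (exp 1) = sqrt (exp (1/2) * exp (1/2::real))" by (simp only: e)
      also have "\<dots> = exp (1/2)" by (simp only: real_sqrt_abs2 abs_exp_cancel)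
      finally have "1 / sqrt (exp 1) = 1 / exp (1/2::real)" by simp
      also have "\<dots> = exp (- (1/2))" by (simp add: exp_minus field_simps)
      finally show ?thesis by simp
    qed
    have u1: "1 / u = 1 + P" unfolding P_def u_def using u0 unfolding u_def by (simp add: field_simps)
    have dd: "(1 - a) / x - (1 - b) / x = (b - a) * (1 / x)" by (simp add: diff_divide_distrib[symmetric])
    have diff: "h0 {1,2} s p - g_fun (real s * p) = P + (b - a) * (2 + 1 / x)"
    proof -
      have "h0 {1,2} s p - g_fun (real s * p) = 1 / u - 1 + 2 * (b - a) + ((1 - a) / x - (1 - b) / x)"
        unfolding H1 G1 by (simp add: algebra_simps)
      also have "\<dots> = P + (b - a) * (2 + 1 / x)" unfolding u1 dd by (simp add: algebra_simps)
      finally show ?thesis .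
    qed
    have "(b - a) * (2 + 1 / x) \<le> b * (x * P / 2) * (2 + 1 / x)"
      using ba x0 by (intro mult_right_mono) auto
    also have "\<dots> = b * (x + 1 / 2) * P" using x0 by (simp add: field_simps)
    also have "\<dots> \<le> exp (- 1 / 2) * P"
    proof -
      have "x + 1 / 2 \<le> exp (x - 1 / 2)" using exp_ge_add_one_self[of "x - 1/2"] by simp
      then have "b * (x + 1 / 2) \<le> b * exp (x - 1 / 2)" using b0 by simp
      also have "b * exp (x - 1 / 2) = exp (- 1 / 2)" unfolding b_def by (simp add: exp_add[symmetric])
      finally show ?thesis using P0 by (simp add: mult_right_mono)
    qed
    finally have "(b - a) * (2 + 1 / x) \<le> exp (- 1 / 2) * P" .
    moreover have "(1 + 1 / sqrt (exp 1)) * (p / (1 - p)) = P + exp (- 1 / 2) * P"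
      unfolding sq P_def u_def by (simp add: distrib_right add_divide_distrib)
    ultimately show ?thesis using diff by linarith
  qed
  have part3: "h0 J_sym s p \<le> 1/2 * (g_fun (real s * p) + exp (- 2 * real s * p) * g_fun (- (real s * p)))
           + 1/2 * (1 + 2 / exp (3/4)) * (p / (1 - p))
           + (4 * exp (3/2) - 1) / (6 * exp 3) * (p\<^sup>2 / (1 - p\<^sup>2)\<^sup>2)"
  proof -
    have HJ: "h0 J_sym s p = ((1 / u - 2 * a + (1 - a) / x) + r * (1 / v - 2 * B + (1 - B) / (- x))) / 2"
      using hsym[OF assms] unfolding HH_def u_def v_def a_def x_def r_def B_def
      by (simp add: mult.commute)
    have GJ: "1/2 * (g_fun (real s * p) + exp (- 2 * real s * p) * g_fun (- (real s * p)))
        = ((1 - 2 * b + (1 - b) / x) + q * (1 - 2 * E + (1 - E) / (- x))) / 2"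
      unfolding g_fun_def b_def q_def E_def x_def by simp
    have rB: "r * B = a" unfolding r_def B_def a_def using u0 unfolding v_def
      by (simp add: power_divide)
    have qE: "q * E = b" unfolding q_def E_def b_def by (simp add: exp_add[symmetric])
    have D: "h0 J_sym s p - 1/2 * (g_fun (real s * p) + exp (- 2 * real s * p) * g_fun (- (real s * p)))
       = (P - r * p / v + 4 * (b - a) + (q - r) * (1 / x - 1)) / 2"
      unfolding HJ GJ P_def by (rule algD[OF u_def v_def _ _ _ rB qE]) (use x0 u0 in auto)
    have T1: "- (r * p / v) \<le> 0" using r0 u0 assms by simp
    have T2: "4 * (b - a) \<le> 2 / exp 1 * P"
    proof -
      have "4 * (b - a) \<le> 2 * (b * x) * P" using ba by (simp add: algebra_simps)
      moreover have "b * x \<le> 1 / exp 1"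
      proof -
        have "x \<le> exp (x - 1)" using exp_ge_add_one_self[of "x - 1"] by simp
        then have "b * x \<le> b * exp (x - 1)" using b0 by simp
        also have "b * exp (x - 1) = 1 / exp 1" unfolding b_def by (simp add: exp_diff exp_minus field_simps)
        finally show ?thesis .
      qed
      then have "2 * (b * x) * P \<le> 2 * (1 / exp 1) * P" using P0 by (intro mult_right_mono) auto
      ultimately show ?thesis by simp
    qed
    have T3: "(q - r) * (1 / x - 1) \<le> P / 6"
    proof (cases "x \<le> 1")
      case False
      then have "1 / x - 1 \<le> 0" using x0 by (simp add: divide_le_eq)
      then have "(q - r) * (1 / x - 1) \<le> 0" using rq by (simp add: mult_nonneg_nonpos)
      then show ?thesis using P0 by linarith
    next
      case True
      have nn: "1 / x - 1 \<ge> 0" using True x0 by (simp add: le_divide_eq)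
      have "(q - r) * (1 / x - 1) \<le> q * K * (1 / x - 1)" using qr nn by (rule mult_right_mono)
      also have "q * K * (1 / x - 1) = q * (2 / 3 * (1 - x) * (p / v) * P)"
      proof -
        have k1: "K * (1 / x - 1) = 2 / 3 * (1 - x) * (p\<^sup>2 / (1 - p\<^sup>2))"
          unfolding K_def using x0 p2 by (simp add: field_simps)
        have uv: "1 - p\<^sup>2 = u * v" unfolding u_def v_def by (simp add: algebra_simps power2_eq_square)
        have k2: "p\<^sup>2 / (1 - p\<^sup>2) = (p / v) * P" unfolding uv P_def using u0
          by (simp add: power2_eq_square)
        show ?thesis using k1 k2 by (simp add: mult.assoc)
      qed
      also have "\<dots> \<le> 1 * (2 / 3 * (1 - x) * x * P)"
      proof (rule mult_mono)
        show "q \<le> 1" by (rule b0)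
        have "p / v \<le> p" using u0 assms unfolding v_def by (simp add: divide_le_eq)
        then have "p / v \<le> x" using px by linarith
        then show "2 / 3 * (1 - x) * (p / v) * P \<le> 2 / 3 * (1 - x) * x * P"
          using True P0 by (intro mult_right_mono mult_left_mono) auto
        have "p / v \<ge> 0" using u0 assms by simp
        then show "0 \<le> 2 / 3 * (1 - x) * (p / v) * P" using True P0 by (intro mult_nonneg_nonneg) auto
      qed (use True P0 x0 in auto)
      also have "\<dots> \<le> P / 6"
      proof -
        have "0 \<le> (x - 1/2)\<^sup>2" by simp
        then have "(1 - x) * x \<le> 1 / 4" by (simp add: power2_eq_square algebra_simps)
        then have "2 / 3 * ((1 - x) * x) * P \<le> 2 / 3 * (1 / 4) * P" using P0 by (intro mult_right_mono mult_left_mono) auto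
        then show ?thesis by (simp add: algebra_simps)
      qed
      finally show ?thesis .
    qed
    have cst: "2 / exp 1 + 1 / 6 \<le> 2 / (exp (3/4) :: real)"
    proof -
      have e1: "exp (3/4) * exp (1/4) = exp (1::real)" by (simp add: exp_add[symmetric])
      have "5 / 4 \<le> exp (1/4::real)" using exp_ge_add_one_self[of "1/4::real"] by simp
      have "exp 1 \<le> (3::real)" by (rule exp_le)
      have "2 / exp (3/4) = 2 * exp (1/4) / (exp 1 :: real)" using e1 by (simp add: field_simps)
      moreover have "2 / exp 1 + 1 / 6 \<le> 2 * (5 / 4) / (exp 1 :: real)"
        using \<open>exp 1 \<le> 3\<close> by (simp add: field_simps)
      moreover have "2 * (5 / 4) / exp 1 \<le> 2 * exp (1/4) / (exp 1 :: real)"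
        by (rule divide_right_mono) (use \<open>5 / 4 \<le> exp (1/4)\<close> in auto)
      ultimately show ?thesis by linarith
    qed
    have Cnn: "(4 * exp (3/2) - 1) / (6 * exp 3) * (p\<^sup>2 / (1 - p\<^sup>2)\<^sup>2) \<ge> 0"
    proof -
      have "4 * exp (3/2::real) - 1 \<ge> 0" using exp_ge_add_one_self[of "3/2::real"] by linarith
      then have c1: "(4 * exp (3/2) - 1) / (6 * exp 3) \<ge> (0::real)" by (intro divide_nonneg_pos) auto
      have c2: "p\<^sup>2 / (1 - p\<^sup>2)\<^sup>2 \<ge> 0" by simp
      show ?thesis using c1 c2 by (rule mult_nonneg_nonneg)
    qed
    have "P - r * p / v + 4 * (b - a) + (q - r) * (1 / x - 1) \<le> P + (2 / exp 1 * P + P / 6)"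
      using T1 T2 T3 by linarith
    also have "\<dots> = P + (2 / exp 1 + 1 / 6) * P" by (simp add: algebra_simps)
    also have "(2 / exp 1 + 1 / 6) * P \<le> 2 / exp (3/4) * P"
      by (rule mult_right_mono[OF cst]) (use P0 in simp)
    finally have TT: "P - r * p / v + 4 * (b - a) + (q - r) * (1 / x - 1) \<le> P + 2 / exp (3/4) * P" by simp
    have eqR: "1/2 * (1 + 2 / exp (3/4)) * (p / (1 - p)) = (P + 2 / exp (3/4) * P) / 2"
    proof -
      have gen: "\<And>c Q :: real. 1/2 * (1 + c) * Q = (Q + c * Q) / 2" by (simp add: algebra_simps)
      show ?thesis unfolding P_def u_def by (rule gen)
    qed
    have "h0 J_sym s p - 1/2 * (g_fun (real s * p) + exp (- 2 * real s * p) * g_fun (- (real s * p)))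
        \<le> 1/2 * (1 + 2 / exp (3/4)) * (p / (1 - p))" unfolding D eqR by (rule divide_right_mono[OF TT]) simp
    then show ?thesis using Cnn by linarith
  qed
  show ?thesis using part1 part2 part3 by blast
qed

end
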